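(* With $\mathcal I_1,\dots,\mathcal I_6$ as defined in the context, the following hold: (i) $\mathcal I_2\mathcal I_3^2-4\mathcal I_4\mathcal I_5-\mathcal I_6^2=0$ identically on $\mathfrak{sl}(3,\mathbb C)$; (ii) $\mathcal I_1,\dots,\mathcal I_5$ are algebraically independent, and this relation generates the ideal of all polynomial relations among $\mathcal I_1,\dots,\mathcal I_6$; (iii) the algebra $R=\mathbb C[\mathcal I_1,\dots,\mathcal I_6]$ decomposes as a direct sum of graded vector spaces $R=\mathbb C[\mathcal I_1,\dots,\mathcal I_5]\oplus\mathcal I_6\,\mathbb C[\mathcal I_1,\dots,\mathcal I_5]$ (a Hironaka decomposition with primary invariants $\mathcal I_1,\dots,\mathcal I_5$ and secondary invariants $1,\mathcal I_6$); (iv) the Hilbert series of $R$ (graded by polynomial degree) is $$H(R,q)=\frac{1+q^3}{(1-q)(1-q^2)^2(1-q^3)^2}.$$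
   Context: For $M=(m_{ij})\in\mathfrak{sl}(3,\mathbb C)$ (traceless $3\times3$ complex matrices) define the linear coordinate functions $x_1=m_{12}$, $y_1=m_{21}$, $x_2=m_{23}$, $y_2=m_{32}$, $x_3=m_{13}$, $y_3=m_{31}$, $h_1=m_{11}-m_{22}$, $h_0=\tfrac12(m_{11}+m_{22})-m_{33}$. Define the polynomials $\mathcal I_1=h_0$, $\mathcal I_2=h_1^2+4x_1y_1$, $\mathcal I_3=x_2y_2+x_3y_3$, $\mathcal I_4=h_1y_2y_3+y_1y_2^2-x_1y_3^2$, $\mathcal I_5=h_1x_2x_3+x_1x_2^2-x_3^2y_1$, $\mathcal I_6=h_1(x_2y_2-x_3y_3)-2(y_1y_2x_3+x_1x_2y_3)$. *)

theory Defs
  imports "HOL-Analysis.Analysis" "HOL-Library.Poly_Mapping" "HOL-Library.Function_Algebras"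
          "HOL-Computational_Algebra.Formal_Power_Series"
begin

text \<open>sl(3,C): traceless 3x3 complex matrices. Rows/columns indexed by the
  numeral type 3 (index 3 coincides with 0 in that type; this is just a relabelling).\<close>
definition sl3 :: "(complex^3^3) set" where
  "sl3 = {M. M$1$1 + M$2$2 + M$3$3 = 0}"

definition cx1 :: "complex^3^3 \<Rightarrow> complex" where "cx1 M = M$1$2"
definition cy1 :: "complex^3^3 \<Rightarrow> complex" where "cy1 M = M$2$1"
definition cx2 :: "complex^3^3 \<Rightarrow> complex" where "cx2 M = M$2$3"
definition cy2 :: "complex^3^3 \<Rightarrow> complex" where "cy2 M = M$3$2"
definition cx3 :: "complex^3^3 \<Rightarrow> complex" where "cx3 M = M$1$3"
definition cy3 :: "complex^3^3 \<Rightarrow> complex" where "cy3 M = M$3$1"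
definition ch1 :: "complex^3^3 \<Rightarrow> complex" where "ch1 M = M$1$1 - M$2$2"
definition ch0 :: "complex^3^3 \<Rightarrow> complex" where "ch0 M = (M$1$1 + M$2$2) / 2 - M$3$3"

definition I1 :: "complex^3^3 \<Rightarrow> complex" where "I1 M = ch0 M"
definition I2 :: "complex^3^3 \<Rightarrow> complex" where "I2 M = ch1 M ^ 2 + 4 * cx1 M * cy1 M"
definition I3 :: "complex^3^3 \<Rightarrow> complex" where "I3 M = cx2 M * cy2 M + cx3 M * cy3 M"
definition I4 :: "complex^3^3 \<Rightarrow> complex" where
  "I4 M = ch1 M * cy2 M * cy3 M + cy1 M * cy2 M ^ 2 - cx1 M * cy3 M ^ 2"
definition I5 :: "complex^3^3 \<Rightarrow> complex" where
  "I5 M = ch1 M * cx2 M * cx3 M + cx1 M * cx2 M ^ 2 - cx3 M ^ 2 * cy1 M"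
definition I6 :: "complex^3^3 \<Rightarrow> complex" where
  "I6 M = ch1 M * (cx2 M * cy2 M - cx3 M * cy3 M)
          - 2 * (cy1 M * cy2 M * cx3 M + cx1 M * cx2 M * cy3 M)"

definition Inv :: "nat \<Rightarrow> complex^3^3 \<Rightarrow> complex" where
  "Inv i = (if i = 1 then I1 else if i = 2 then I2 else if i = 3 then I3
            else if i = 4 then I4 else if i = 5 then I5 else if i = 6 then I6 else (\<lambda>_. 0))"

text \<open>Multivariate polynomials over C in variables indexed by nat:
  finitely supported maps from monomials (exponent vectors) to coefficients.\<close>
type_synonym mpoly = "(nat \<Rightarrow>\<^sub>0 nat) \<Rightarrow>\<^sub>0 complex"

definition Var :: "nat \<Rightarrow> mpoly" where
  "Var i = Poly_Mapping.single (Poly_Mapping.single i 1) 1"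

definition vars :: "mpoly \<Rightarrow> nat set" where
  "vars p = (\<Union>m\<in>Poly_Mapping.keys p. Poly_Mapping.keys m)"

definition peval :: "(nat \<Rightarrow> complex) \<Rightarrow> mpoly \<Rightarrow> complex" where
  "peval a p = (\<Sum>m\<in>Poly_Mapping.keys p.
       Poly_Mapping.lookup p m * (\<Prod>i\<in>Poly_Mapping.keys m. a i ^ Poly_Mapping.lookup m i))"

definition polyfun :: "mpoly \<Rightarrow> complex^3^3 \<Rightarrow> complex" where
  "polyfun P = (\<lambda>M. if M \<in> sl3 then peval (\<lambda>i. Inv i M) P else 0)"

definition relpoly :: mpoly where
  "relpoly = Var 2 * Var 3 ^ 2 - 4 * Var 4 * Var 5 - Var 6 ^ 2"

definition Ralg :: "(complex^3^3 \<Rightarrow> complex) set" where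
  "Ralg = polyfun ` {P. vars P \<subseteq> {1..6}}"

definition Rdeg :: "nat \<Rightarrow> (complex^3^3 \<Rightarrow> complex) set" where
  "Rdeg d = {f \<in> Ralg. \<forall>t::complex. \<forall>M\<in>sl3. f (\<chi> i j. t * M$i$j) = t ^ d * f M}"

definition fscale :: "complex \<Rightarrow> ('a \<Rightarrow> complex) \<Rightarrow> ('a \<Rightarrow> complex)" where
  "fscale c f = (\<lambda>x. c * f x)"

definition hilb :: "nat \<Rightarrow> nat" where
  "hilb d = vector_space.dim fscale (Rdeg d)"

end

theory Submission imports Defs begin

definition mon :: "(nat \<Rightarrow> complex) \<Rightarrow> (nat \<Rightarrow>\<^sub>0 nat) \<Rightarrow> complex" where
  "mon a m = (\<Prod>i\<in>Poly_Mapping.keys m. a i ^ Poly_Mapping.lookup m i)"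

lemma mon_superset:
  assumes "finite S" "Poly_Mapping.keys m \<subseteq> S"
  shows "mon a m = (\<Prod>i\<in>S. a i ^ Poly_Mapping.lookup m i)"
  unfolding mon_def
  by (rule prod.mono_neutral_left) (use assms in \<open>auto simp: in_keys_iff\<close>)

lemma mon_zero [simp]: "mon a 0 = 1" by (simp add: mon_def)

lemma mon_add: "mon a (m1 + m2) = mon a m1 * mon a m2"
proof -
  let ?S = "Poly_Mapping.keys m1 \<union> Poly_Mapping.keys m2"
  have "mon a (m1 + m2) = (\<Prod>i\<in>?S. a i ^ Poly_Mapping.lookup (m1+m2) i)"
    by (rule mon_superset) (auto dest: keys_add[THEN subsetD])
  also have "\<dots> = (\<Prod>i\<in>?S. a i ^ Poly_Mapping.lookup m1 i * a i ^ Poly_Mapping.lookup m2 i)"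
    by (simp add: lookup_add power_add)
  also have "\<dots> = mon a m1 * mon a m2"
    by (simp add: prod.distrib mon_superset[of ?S])
  finally show ?thesis .
qed

lemma peval_superset:
  assumes "finite K" "Poly_Mapping.keys P \<subseteq> K"
  shows "peval a P = (\<Sum>m\<in>K. Poly_Mapping.lookup P m * mon a m)"
  unfolding peval_def mon_def[symmetric]
  by (rule sum.mono_neutral_left) (use assms in \<open>auto simp: in_keys_iff\<close>)

lemma peval_zero [simp]: "peval a 0 = 0" by (simp add: peval_def)

lemma peval_add: "peval a (P + Q) = peval a P + peval a Q"
proof -
  let ?K = "Poly_Mapping.keys P \<union> Poly_Mapping.keys Q"
  have "peval a (P + Q) = (\<Sum>m\<in>?K. Poly_Mapping.lookup (P+Q) m * mon a m)"
    by (rule peval_superset) (auto dest: keys_add[THEN subsetD])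
  also have "\<dots> = (\<Sum>m\<in>?K. Poly_Mapping.lookup P m * mon a m) + (\<Sum>m\<in>?K. Poly_Mapping.lookup Q m * mon a m)"
    by (simp add: lookup_add distrib_right sum.distrib)
  also have "\<dots> = peval a P + peval a Q"
    by (simp add: peval_superset[of ?K])
  finally show ?thesis .
qed

lemma peval_uminus: "peval a (- P) = - peval a P"
  by (simp add: peval_def keys_minus sum_negf)

lemma peval_diff: "peval a (P - Q) = peval a P - peval a Q"
  using peval_add[of a P "-Q"] by (simp add: peval_uminus)

lemma peval_single: "peval a (Poly_Mapping.single m c) = c * mon a m"
  by (simp add: peval_def mon_def)

lemma peval_sum: "peval a (sum f K) = (\<Sum>k\<in>K. peval a (f k))"
  by (induction K rule: infinite_finite_induct) (auto simp: peval_add)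

lemma pm_sum_singles:
  "(P::mpoly) = (\<Sum>m\<in>Poly_Mapping.keys P. Poly_Mapping.single m (Poly_Mapping.lookup P m))"
proof (rule poly_mapping_eqI)
  fix k
  show "Poly_Mapping.lookup P k = Poly_Mapping.lookup (\<Sum>m\<in>Poly_Mapping.keys P. Poly_Mapping.single m (Poly_Mapping.lookup P m)) k"
    by (simp add: lookup_sum lookup_single when_def in_keys_iff)
qed

lemma peval_mult: "peval a (P * Q) = peval a P * peval a Q"
proof -
  have "P * Q = (\<Sum>m\<in>Poly_Mapping.keys P. Poly_Mapping.single m (Poly_Mapping.lookup P m)) *
                (\<Sum>n\<in>Poly_Mapping.keys Q. Poly_Mapping.single n (Poly_Mapping.lookup Q n))"
    using pm_sum_singles[of P] pm_sum_singles[of Q] by simp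
  also have "\<dots> = (\<Sum>m\<in>Poly_Mapping.keys P. \<Sum>n\<in>Poly_Mapping.keys Q.
      Poly_Mapping.single (m+n) (Poly_Mapping.lookup P m * Poly_Mapping.lookup Q n))"
    by (simp add: sum_distrib_left sum_distrib_right mult_single) (rule sum.swap)
  finally have "peval a (P*Q) = (\<Sum>m\<in>Poly_Mapping.keys P. \<Sum>n\<in>Poly_Mapping.keys Q.
      (Poly_Mapping.lookup P m * mon a m) * (Poly_Mapping.lookup Q n * mon a n))"
    by (simp add: peval_sum peval_single mon_add mult_ac)
  also have "\<dots> = peval a P * peval a Q"
    by (simp add: peval_def mon_def sum_product)
  finally show ?thesis .
qed

lemma peval_one [simp]: "peval a 1 = 1"
  using peval_single[of a 0 1] by simp

lemma peval_numeral [simp]: "peval a (numeral n) = numeral n"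
  using peval_single[of a 0 "numeral n"] by simp

lemma peval_power: "peval a (P ^ k) = peval a P ^ k"
  by (induction k) (auto simp: peval_mult)

lemma peval_Var [simp]: "peval a (Var i) = a i"
  by (simp add: Var_def peval_single mon_def)


lemma sum_shift_digits:
  "(\<Sum>i<Suc n. f i * D^i) = f 0 + D * (\<Sum>i<n. f (Suc i) * (D::nat)^i)"
proof -
  have "(\<Sum>i<Suc n. f i * D^i) = f 0 * D^0 + (\<Sum>i<n. f (Suc i) * D^(Suc i))"
    by (rule sum.lessThan_Suc_shift)
  also have "(\<Sum>i<n. f (Suc i) * D^(Suc i)) = D * (\<Sum>i<n. f (Suc i) * D^i)"
    unfolding sum_distrib_left by (intro sum.cong refl) simp
  finally show ?thesis by simp
qed

lemma digits_unique:
  fixes f g :: "nat \<Rightarrow> nat"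
  assumes "\<forall>i<N. f i < D" "\<forall>i<N. g i < D" "(\<Sum>i<N. f i * D^i) = (\<Sum>i<N. g i * D^i)"
  shows "\<forall>i<N. f i = g i"
  using assms
proof (induction N arbitrary: f g)
  case 0 then show ?case by simp
next
  case (Suc n)
  have f0: "f 0 < D" and g0: "g 0 < D" using Suc.prems by auto
  from Suc.prems(3) have E: "f 0 + D * (\<Sum>i<n. f (Suc i) * D^i) = g 0 + D * (\<Sum>i<n. g (Suc i) * D^i)"
    by (simp only: sum_shift_digits)
  hence "(f 0 + D * (\<Sum>i<n. f (Suc i) * D^i)) mod D = (g 0 + D * (\<Sum>i<n. g (Suc i) * D^i)) mod D" by simp
  hence h0: "f 0 = g 0" using f0 g0 by simp
  with E have "D * (\<Sum>i<n. f (Suc i) * D^i) = D * (\<Sum>i<n. g (Suc i) * D^i)" by simp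
  moreover have "D > 0" using f0 by simp
  ultimately have S: "(\<Sum>i<n. f (Suc i) * D^i) = (\<Sum>i<n. g (Suc i) * D^i)" by simp
  have "\<forall>i<n. f (Suc i) < D" "\<forall>i<n. g (Suc i) < D" using Suc.prems(1,2) by auto
  hence "\<forall>i<n. f (Suc i) = g (Suc i)"
    using Suc.IH[of "\<lambda>i. f (Suc i)" "\<lambda>i. g (Suc i)"] S by blast
  show ?case
  proof (intro allI impI)
    fix i assume "i < Suc n"
    then show "f i = g i" using h0 \<open>\<forall>i<n. f (Suc i) = g (Suc i)\<close>
      by (cases i) auto
  qed
qed

lemma nonzero_witness:
  assumes "P \<noteq> 0"
  shows "\<exists>D\<ge>2. \<exists>t::real. t > 1 \<and> peval (\<lambda>i. complex_of_real t ^ (D^i)) P \<noteq> 0"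
proof -
  define K where "K = Poly_Mapping.keys P"
  have finK: "finite K" unfolding K_def by simp
  define D where "D = 2 + (\<Sum>m\<in>K. \<Sum>i\<in>Poly_Mapping.keys m. Poly_Mapping.lookup m i)"
  define N where "N = Suc (\<Sum>m\<in>K. \<Sum>i\<in>Poly_Mapping.keys m. i)"
  have D2: "D \<ge> 2" unfolding D_def by simp
  have Dbound: "Poly_Mapping.lookup m i < D" if "m \<in> K" for m i
  proof (cases "i \<in> Poly_Mapping.keys m")
    case True
    have "Poly_Mapping.lookup m i \<le> (\<Sum>i\<in>Poly_Mapping.keys m. Poly_Mapping.lookup m i)"
      using True by (intro member_le_sum) auto
    also have "\<dots> \<le> (\<Sum>m\<in>K. \<Sum>i\<in>Poly_Mapping.keys m. Poly_Mapping.lookup m i)"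
      using that finK by (intro member_le_sum[of m K "\<lambda>m. \<Sum>i\<in>Poly_Mapping.keys m. Poly_Mapping.lookup m i"]) auto
    finally show ?thesis unfolding D_def by simp
  next
    case False then show ?thesis using D2 by (simp add: in_keys_iff)
  qed
  have Nbound: "Poly_Mapping.keys m \<subseteq> {..<N}" if "m \<in> K" for m
  proof
    fix i assume i: "i \<in> Poly_Mapping.keys m"
    have "i \<le> (\<Sum>i\<in>Poly_Mapping.keys m. i)"
      using i by (intro member_le_sum) auto
    also have "\<dots> \<le> (\<Sum>m\<in>K. \<Sum>i\<in>Poly_Mapping.keys m. i)"
      using that finK by (intro member_le_sum[of m K "\<lambda>m. \<Sum>i\<in>Poly_Mapping.keys m. i"]) auto
    finally show "i \<in> {..<N}" unfolding N_def by simp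
  qed
  define \<phi> where "\<phi> m = (\<Sum>i<N. Poly_Mapping.lookup m i * D^i)" for m
  have inj: "inj_on \<phi> K"
  proof (rule inj_onI)
    fix m1 m2 assume m: "m1 \<in> K" "m2 \<in> K" "\<phi> m1 = \<phi> m2"
    have "\<forall>i<N. Poly_Mapping.lookup m1 i = Poly_Mapping.lookup m2 i"
      by (rule digits_unique[where D=D]) (use m Dbound in \<open>auto simp: \<phi>_def\<close>)
    moreover have "Poly_Mapping.lookup m1 i = 0 \<and> Poly_Mapping.lookup m2 i = 0" if "i \<ge> N" for i
      using Nbound[OF m(1)] Nbound[OF m(2)] that by (auto simp: in_keys_iff)
    ultimately show "m1 = m2"
      by (intro poly_mapping_eqI) (metis not_le)
  qed
  have monx: "mon (\<lambda>i. x ^ (D^i)) m = x ^ \<phi> m" if "m \<in> K" for m and x :: complex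
  proof -
    have "mon (\<lambda>i. x ^ (D^i)) m = (\<Prod>i<N. (x^(D^i))^Poly_Mapping.lookup m i)"
      by (rule mon_superset[OF _ Nbound[OF that]]) simp
    also have "\<dots> = (\<Prod>i<N. x^(Poly_Mapping.lookup m i * D^i))"
      by (intro prod.cong refl) (metis power_mult mult.commute)
    also have "\<dots> = x ^ \<phi> m" by (simp add: \<phi>_def power_sum)
    finally show ?thesis .
  qed
  define p where "p = (\<Sum>m\<in>K. Polynomial.monom (Poly_Mapping.lookup P m) (\<phi> m))"
  have pev: "peval (\<lambda>i. x ^ (D^i)) P = poly p x" for x :: complex
    unfolding peval_def K_def[symmetric] p_def
    by (simp add: mon_def[symmetric] monx poly_sum poly_monom)
  obtain m0 where m0: "m0 \<in> K" using assms unfolding K_def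
    by (metis ex_in_conv keys_eq_empty)
  have "coeff p (\<phi> m0) = (\<Sum>m\<in>K. if \<phi> m0 = \<phi> m then Poly_Mapping.lookup P m else 0)"
    by (simp add: p_def coeff_sum coeff_monom eq_commute)
  also have "\<dots> = (\<Sum>m\<in>{m0}. Poly_Mapping.lookup P m)"
    by (rule sum.mono_neutral_cong_right) (use finK m0 inj in \<open>auto dest: inj_onD\<close>)
  also have "\<dots> \<noteq> 0" using m0 by (simp add: K_def in_keys_iff)
  finally have "p \<noteq> 0" by auto
  hence fin: "finite {x. poly p x = 0}" by (rule poly_roots_finite)
  have "finite (complex_of_real -` {x. poly p x = 0})"
    by (rule finite_vimageI[OF fin]) (simp add: inj_on_def)
  moreover have "infinite {1::real<..}" by (simp add: infinite_Ioi)
  ultimately have "\<not> {1::real<..} \<subseteq> complex_of_real -` {x. poly p x = 0}"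
    using finite_subset by blast
  then obtain t where "t \<in> {1::real<..}" "t \<notin> complex_of_real -` {x. poly p x = 0}"
    by blast
  hence "t > 1" "peval (\<lambda>i. complex_of_real t ^ (D^i)) P \<noteq> 0"
    using pev[of "complex_of_real t"] by auto
  thus ?thesis using D2 by blast
qed


lemma relation_identity: "I2 M * I3 M ^ 2 - 4 * I4 M * I5 M - I6 M ^ 2 = 0"
  unfolding I2_def I3_def I4_def I5_def I6_def by algebra

definition MM :: "complex \<Rightarrow> complex \<Rightarrow> complex \<Rightarrow> complex \<Rightarrow> complex \<Rightarrow> complex^3^3" where
  "MM b1 b2 b3 s r = (\<chi> i j. if i = 1 then (if j = 1 then b1/3 else if j = 2 then b2/4 else r)
     else if i = 2 then (if j = 1 then 1 else if j = 2 then b1/3 else b3/s)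
     else (if j = 1 then 0 else if j = 2 then s else -2*b1/3))"

lemma MM_props:
  assumes "s \<noteq> 0"
  shows "MM b1 b2 b3 s r \<in> sl3" "I1 (MM b1 b2 b3 s r) = b1" "I2 (MM b1 b2 b3 s r) = b2"
    "I3 (MM b1 b2 b3 s r) = b3" "I4 (MM b1 b2 b3 s r) = s^2"
    "I5 (MM b1 b2 b3 s r) = b2 * b3^2 / (4 * s^2) - r^2"
    "I6 (MM b1 b2 b3 s r) = -2 * s * r"
  using assms
  by (simp_all add: MM_def sl3_def I1_def I2_def I3_def I4_def I5_def I6_def
        cx1_def cy1_def cx2_def cy2_def cx3_def cy3_def ch1_def ch0_def field_simps power2_eq_square)


lemma peval_cong:
  assumes "\<And>i. i \<in> vars P \<Longrightarrow> a i = b i"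
  shows "peval a P = peval b P"
  unfolding peval_def
proof (intro sum.cong refl arg_cong2[where f="(*)"] prod.cong)
  fix m i assume "m \<in> Poly_Mapping.keys P" "i \<in> Poly_Mapping.keys m"
  hence "i \<in> vars P" by (auto simp: vars_def)
  thus "a i ^ Poly_Mapping.lookup m i = b i ^ Poly_Mapping.lookup m i" using assms by simp
qed

lemma vars_zero [simp]: "vars 0 = {}" by (simp add: vars_def)

lemma vars_add: "vars (P + Q) \<subseteq> vars P \<union> vars Q"
proof
  fix i assume "i \<in> vars (P + Q)"
  then obtain m where m: "m \<in> Poly_Mapping.keys (P+Q)" "i \<in> Poly_Mapping.keys m" by (auto simp: vars_def)
  from m(1) have "m \<in> Poly_Mapping.keys P \<or> m \<in> Poly_Mapping.keys Q" using keys_add[of P Q] by auto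
  with m(2) show "i \<in> vars P \<union> vars Q" by (auto simp: vars_def)
qed

lemma vars_uminus [simp]: "vars (- P) = vars P"
  unfolding vars_def by (simp add: keys_minus)

lemma vars_diff: "vars (P - Q) \<subseteq> vars P \<union> vars Q"
  using vars_add[of P "-Q"] by simp

lemma vars_mult: "vars (P * Q) \<subseteq> vars P \<union> vars Q"
proof
  fix i assume "i \<in> vars (P * Q)"
  then obtain m where m: "m \<in> Poly_Mapping.keys (P*Q)" "i \<in> Poly_Mapping.keys m" by (auto simp: vars_def)
  then obtain a b where "a \<in> Poly_Mapping.keys P" "b \<in> Poly_Mapping.keys Q" "m = a + b"
    using keys_mult[of P Q] by blast
  moreover have "i \<in> Poly_Mapping.keys a \<or> i \<in> Poly_Mapping.keys b"
    using m(2) keys_add[of a b] \<open>m = a + b\<close> by auto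
  ultimately show "i \<in> vars P \<union> vars Q" by (auto simp: vars_def)
qed

lemma vars_single: "vars (Poly_Mapping.single m c) \<subseteq> Poly_Mapping.keys m"
  by (simp add: vars_def)

lemma vars_Var [simp]: "vars (Var i) = {i}"
  by (simp add: vars_def Var_def)

lemma vars_one [simp]: "vars 1 = {}"
  by (simp add: vars_def)

lemma vars_numeral [simp]: "vars (numeral n) = {}"
  using vars_single[of 0 "numeral n"] by (simp add: single_numeral[symmetric] del: single_numeral)

lemma vars_power: "vars (P ^ k) \<subseteq> vars P"
proof (induction k)
  case 0 show ?case by simp
next
  case (Suc k) show ?case using vars_mult[of P "P^k"] Suc.IH by simp blast
qed

lemma vars_sum: "vars (sum f K) \<subseteq> (\<Union>k\<in>K. vars (f k))"
proof (induction K rule: infinite_finite_induct)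
  case (insert x F) show ?case using insert vars_add[of "f x" "sum f F"] by auto
qed auto


lemma polyfun_MM:
  assumes "vars P \<subseteq> {1..5}" "s \<noteq> 0" "s^2 = b 4" "r^2 = b 2 * b 3 ^ 2 / (4 * b 4) - b 5"
  shows "polyfun P (MM (b 1) (b 2) (b 3) s r) = peval b P"
proof -
  let ?M = "MM (b 1) (b 2) (b 3) s r"
  have "Inv i ?M = b i" if "i \<in> {1..5}" for i
  proof -
    have "i = 1 \<or> i = 2 \<or> i = 3 \<or> i = 4 \<or> i = 5" using that by auto
    thus ?thesis using MM_props[OF assms(2), of "b 1" "b 2" "b 3" r] assms(3,4)
      by (auto simp: Inv_def)
  qed
  hence "peval (\<lambda>i. Inv i ?M) P = peval b P"
    using assms(1) by (intro peval_cong) auto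
  thus ?thesis using MM_props(1)[OF assms(2)] by (simp add: polyfun_def)
qed

lemma indep:
  assumes "vars P \<subseteq> {1..5}" "polyfun P = (\<lambda>_. 0)"
  shows "P = 0"
proof (rule ccontr)
  assume "P \<noteq> 0"
  then obtain D t where D: "D \<ge> (2::nat)" and t: "t > (1::real)"
    and nz: "peval (\<lambda>i. complex_of_real t ^ (D^i)) P \<noteq> 0"
    using nonzero_witness by blast
  define b where "b = (\<lambda>i. complex_of_real t ^ (D^i))"
  have b4: "b 4 \<noteq> 0" using t by (simp add: b_def)
  define s where "s = csqrt (b 4)"
  define r where "r = csqrt (b 2 * b 3 ^ 2 / (4 * b 4) - b 5)"
  have s: "s \<noteq> 0" "s^2 = b 4" using b4 by (auto simp: s_def)
  have r: "r^2 = b 2 * b 3 ^ 2 / (4 * b 4) - b 5" by (simp add: r_def)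
  have "polyfun P (MM (b 1) (b 2) (b 3) s r) = peval b P"
    by (rule polyfun_MM[OF assms(1) s r])
  with assms(2) nz show False by (simp add: b_def)
qed


lemma polyfun_zero [simp]: "polyfun 0 = (\<lambda>_. 0)"
  by (simp add: polyfun_def fun_eq_iff)

lemma core:
  assumes "vars A \<subseteq> {1..5}" "vars B \<subseteq> {1..5}" "\<And>M. polyfun A M + I6 M * polyfun B M = 0"
  shows "A = 0 \<and> B = 0"
proof -
  have "B = 0"
  proof (rule ccontr)
    assume "B \<noteq> 0"
    then obtain D t where D: "D \<ge> (2::nat)" and t: "t > (1::real)"
      and nz: "peval (\<lambda>i. complex_of_real t ^ (D^i)) B \<noteq> 0"
      using nonzero_witness by blast
    define b where "b = (\<lambda>i. complex_of_real t ^ (D^i))"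
    have b4: "b 4 \<noteq> 0" using t by (simp add: b_def)
    define s where "s = csqrt (b 4)"
    define r where "r = csqrt (b 2 * b 3 ^ 2 / (4 * b 4) - b 5)"
    have s: "s \<noteq> 0" "s^2 = b 4" using b4 by (auto simp: s_def)
    have r: "r^2 = b 2 * b 3 ^ 2 / (4 * b 4) - b 5" by (simp add: r_def)
    have r': "(-r)^2 = b 2 * b 3 ^ 2 / (4 * b 4) - b 5" by (simp add: r_def)
    define e1 where "e1 = D^2 + 2 * D^3"
    define e2 where "e2 = D^4 + D^5"
    have "D^3 * 2 \<le> D^3 * D" using D by simp
    hence "2 * D^3 \<le> D^4" by (simp add: power_numeral_reduce mult_ac)
    moreover have "D^2 \<le> D^5" using D by (intro power_increasing) auto
    ultimately have e12: "e1 \<le> e2" unfolding e1_def e2_def by simp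
    have "t^e1 \<le> t^e2" using t e12 by (intro power_increasing) auto
    moreover have "t^e1 > 0" using t by simp
    ultimately have "t^e1 < 4 * t^e2" by simp
    moreover have "b 2 * b 3 ^ 2 = complex_of_real (t^e1)"
      by (simp add: b_def e1_def power_add power_mult[symmetric] mult_ac)
    moreover have "4 * b 4 * b 5 = complex_of_real (4 * t^e2)"
      by (simp add: b_def e2_def power_add)
    ultimately have ne: "b 2 * b 3 ^ 2 \<noteq> 4 * b 4 * b 5"
      by (metis of_real_eq_iff less_irrefl)
    have "r \<noteq> 0"
    proof
      assume "r = 0"
      with r have "b 2 * b 3 ^ 2 / (4 * b 4) = b 5" by simp
      with b4 have "b 2 * b 3 ^ 2 = 4 * b 4 * b 5" by (simp add: field_simps)
      with ne show False by simp
    qed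
    have p1: "polyfun X (MM (b 1) (b 2) (b 3) s r) = peval b X" if "vars X \<subseteq> {1..5}" for X
      by (rule polyfun_MM[OF that s r])
    have p2: "polyfun X (MM (b 1) (b 2) (b 3) s (-r)) = peval b X" if "vars X \<subseteq> {1..5}" for X
      by (rule polyfun_MM[OF that s r'])
    have "peval b A + (-2 * s * r) * peval b B = 0"
      using assms(3)[of "MM (b 1) (b 2) (b 3) s r"] p1[OF assms(1)] p1[OF assms(2)] MM_props(7)[OF s(1)] by simp
    moreover have "peval b A + (-2 * s * (-r)) * peval b B = 0"
      using assms(3)[of "MM (b 1) (b 2) (b 3) s (-r)"] p2[OF assms(1)] p2[OF assms(2)] MM_props(7)[OF s(1)] by simp
    ultimately have "4 * s * r * peval b B = 0" by (simp add: algebra_simps)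
    with s(1) \<open>r \<noteq> 0\<close> nz show False by (simp add: b_def)
  qed
  moreover have "polyfun A = (\<lambda>_. 0)"
    using assms(3) \<open>B = 0\<close> by (simp add: fun_eq_iff)
  ultimately show ?thesis using indep[OF assms(1)] by simp
qed


definition C6 :: mpoly where "C6 = Var 2 * Var 3 ^ 2 - 4 * Var 4 * Var 5"

lemma relpoly_C6: "relpoly = C6 - Var 6 ^ 2"
  by (simp add: relpoly_def C6_def)

lemma vars_C6: "vars C6 \<subseteq> {1..5}"
proof -
  have h: "vars (Var 3 ^ 2) \<subseteq> {3}" using vars_power[of "Var 3" 2] by simp
  have "vars (Var 2 * Var 3 ^ 2) \<subseteq> {2} \<union> {3}"
    using vars_mult[of "Var 2" "Var 3 ^ 2"] h by auto
  hence "vars (Var 2 * Var 3 ^ 2) \<subseteq> {1..5}" by auto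
  moreover have "vars (4 * Var 4 * Var 5) \<subseteq> {4} \<union> {5}"
    using vars_mult[of "4 * Var 4" "Var 5"] vars_mult[of 4 "Var 4"] by auto
  hence "vars (4 * Var 4 * Var 5) \<subseteq> {1..5}" by auto
  ultimately show ?thesis unfolding C6_def using vars_diff by blast
qed

lemma sub56: "{1..5::nat} \<subseteq> {1..6}" by auto

lemma subu: "X \<subseteq> Y \<union> Z \<Longrightarrow> Y \<subseteq> W \<Longrightarrow> Z \<subseteq> W \<Longrightarrow> X \<subseteq> W" by blast

definition DEC :: "mpoly \<Rightarrow> bool" where
  "DEC P \<longleftrightarrow> (\<exists>Q A B. vars Q \<subseteq> {1..6} \<and> vars A \<subseteq> {1..5} \<and> vars B \<subseteq> {1..5} \<and>
      P = Q * relpoly + A + Var 6 * B)"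

lemma DEC_A: "vars A \<subseteq> {1..5} \<Longrightarrow> DEC A"
  unfolding DEC_def by (rule exI[of _ 0], rule exI[of _ A], rule exI[of _ 0]) simp

lemma DEC_add:
  assumes "DEC P" "DEC P'" shows "DEC (P + P')"
proof -
  obtain Q A B where 1: "vars Q \<subseteq> {1..6}" "vars A \<subseteq> {1..5}" "vars B \<subseteq> {1..5}" "P = Q * relpoly + A + Var 6 * B"
    using assms(1) unfolding DEC_def by blast
  obtain Q' A' B' where 2: "vars Q' \<subseteq> {1..6}" "vars A' \<subseteq> {1..5}" "vars B' \<subseteq> {1..5}" "P' = Q' * relpoly + A' + Var 6 * B'"
    using assms(2) unfolding DEC_def by blast
  have "P + P' = (Q + Q') * relpoly + (A + A') + Var 6 * (B + B')"
    using 1(4) 2(4) by (simp add: algebra_simps)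
  moreover have "vars (Q + Q') \<subseteq> {1..6}" "vars (A + A') \<subseteq> {1..5}" "vars (B + B') \<subseteq> {1..5}"
    using 1 2 vars_add[of Q Q'] vars_add[of A A'] vars_add[of B B'] by auto
  ultimately show ?thesis unfolding DEC_def by blast
qed

lemma DEC_mult5:
  assumes "DEC P" "vars T \<subseteq> {1..5}" shows "DEC (T * P)"
proof -
  obtain Q A B where 1: "vars Q \<subseteq> {1..6}" "vars A \<subseteq> {1..5}" "vars B \<subseteq> {1..5}" "P = Q * relpoly + A + Var 6 * B"
    using assms(1) unfolding DEC_def by blast
  have "T * P = (T * Q) * relpoly + (T * A) + Var 6 * (T * B)"
    using 1(4) by (simp add: algebra_simps)
  moreover have T6: "vars T \<subseteq> {1..6}" using assms(2) sub56 by (rule order_trans)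
  moreover have "vars (T * Q) \<subseteq> {1..6}" by (rule subu[OF vars_mult T6 1(1)])
  moreover have "vars (T * A) \<subseteq> {1..5}" by (rule subu[OF vars_mult assms(2) 1(2)])
  moreover have "vars (T * B) \<subseteq> {1..5}" by (rule subu[OF vars_mult assms(2) 1(3)])
  ultimately show ?thesis unfolding DEC_def by blast
qed

lemma DEC_Var6:
  assumes "DEC P" shows "DEC (Var 6 * P)"
proof -
  obtain Q A B where 1: "vars Q \<subseteq> {1..6}" "vars A \<subseteq> {1..5}" "vars B \<subseteq> {1..5}" "P = Q * relpoly + A + Var 6 * B"
    using assms(1) unfolding DEC_def by blast
  have "Var 6 * P = (Var 6 * Q - B) * relpoly + (B * C6) + Var 6 * A"
    unfolding 1(4) by (simp add: relpoly_C6 algebra_simps power2_eq_square)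
  moreover have "vars (Var 6 * Q) \<subseteq> {1..6}" by (rule subu[OF vars_mult _ 1(1)]) simp
  hence "vars (Var 6 * Q - B) \<subseteq> {1..6}" by (rule subu[OF vars_diff _ order_trans[OF 1(3) sub56]])
  moreover have "vars (B * C6) \<subseteq> {1..5}"
    using 1 vars_C6 vars_mult[of B C6] by auto
  ultimately show ?thesis using 1 unfolding DEC_def by blast
qed

lemma Var6_power: "Var 6 ^ k = Poly_Mapping.single (Poly_Mapping.single 6 k) 1"
proof (induction k)
  case 0 show ?case by simp
next
  case (Suc k)
  have "Var 6 ^ Suc k = Var 6 * Var 6 ^ k" by simp
  also have "\<dots> = Poly_Mapping.single (Poly_Mapping.single 6 1 + Poly_Mapping.single 6 k) 1"
    by (simp only: Suc) (simp add: Var_def mult_single)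
  also have "Poly_Mapping.single 6 1 + Poly_Mapping.single 6 k = Poly_Mapping.single (6::nat) (Suc k)"
    by (simp add: single_add[symmetric])
  finally show ?case .
qed

lemma DEC_pow6: "DEC (Var 6 ^ k)"
proof (induction k)
  case 0 show ?case by (rule DEC_A) simp
next
  case (Suc k) show ?case using DEC_Var6[OF Suc] by simp
qed

lemma DEC_single:
  assumes "Poly_Mapping.keys m \<subseteq> {1..6}"
  shows "DEC (Poly_Mapping.single m c)"
proof -
  define m' where "m' = Poly_Mapping.update 6 0 m"
  define k where "k = Poly_Mapping.lookup m 6"
  have "m = m' + Poly_Mapping.single 6 k"
    by (rule poly_mapping_eqI) (simp add: m'_def k_def lookup_add lookup_update lookup_single when_def)
  hence "Poly_Mapping.single m c = Poly_Mapping.single m' c * Var 6 ^ k"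
    by (simp add: Var6_power mult_single)
  moreover have "vars (Poly_Mapping.single m' c) \<subseteq> {1..5}"
  proof -
    have "Poly_Mapping.keys m' \<subseteq> {1..5}" using assms by (auto simp: m'_def keys_update)
    thus ?thesis using vars_single[of m' c] by auto
  qed
  ultimately show ?thesis using DEC_mult5[OF DEC_pow6] by (simp add: mult.commute)
qed

lemma DEC_all:
  assumes "vars P \<subseteq> {1..6}" shows "DEC P"
proof -
  have "DEC (\<Sum>m\<in>K. Poly_Mapping.single m (Poly_Mapping.lookup P m))" if "K \<subseteq> Poly_Mapping.keys P" for K
    using that
  proof (induction K rule: infinite_finite_induct)
    case (infinite A) then show ?case by (simp add: DEC_A)
  next
    case empty then show ?case by (simp add: DEC_A)
  next
    case (insert x F)
    have "Poly_Mapping.keys x \<subseteq> {1..6}" using insert.prems assms by (auto simp: vars_def)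
    then show ?case using insert DEC_add DEC_single by simp
  qed
  then show ?thesis using pm_sum_singles[of P] by (metis order_refl)
qed

lemma peval_relpoly: "M \<in> sl3 \<Longrightarrow> peval (\<lambda>i. Inv i M) relpoly = 0"
  using relation_identity[of M]
  by (simp add: relpoly_def peval_diff peval_mult peval_power Inv_def)

lemma polyfun_dec:
  assumes "P = Q * relpoly + A + Var 6 * B"
  shows "polyfun P M = polyfun A M + I6 M * polyfun B M"
  using assms peval_relpoly[of M]
  by (simp add: polyfun_def peval_add peval_mult Inv_def)


definition wt :: "nat \<Rightarrow> nat" where
  "wt i = (if i = 1 then 1 else if i = 2 \<or> i = 3 then 2 else 3)"

definition wdeg :: "(nat \<Rightarrow>\<^sub>0 nat) \<Rightarrow> nat" where
  "wdeg m = (\<Sum>i\<in>Poly_Mapping.keys m. Poly_Mapping.lookup m i * wt i)"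

lemma wdeg_superset:
  assumes "finite S" "Poly_Mapping.keys m \<subseteq> S"
  shows "wdeg m = (\<Sum>i\<in>S. Poly_Mapping.lookup m i * wt i)"
  unfolding wdeg_def
  by (rule sum.mono_neutral_left) (use assms in \<open>auto simp: in_keys_iff\<close>)

lemma wdeg_add: "wdeg (m1 + m2) = wdeg m1 + wdeg m2"
proof -
  let ?S = "Poly_Mapping.keys m1 \<union> Poly_Mapping.keys m2"
  have "wdeg (m1 + m2) = (\<Sum>i\<in>?S. Poly_Mapping.lookup (m1+m2) i * wt i)"
    by (rule wdeg_superset) (auto dest: keys_add[THEN subsetD])
  also have "\<dots> = (\<Sum>i\<in>?S. Poly_Mapping.lookup m1 i * wt i) + (\<Sum>i\<in>?S. Poly_Mapping.lookup m2 i * wt i)"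
    by (simp add: lookup_add sum.distrib algebra_simps)
  also have "\<dots> = wdeg m1 + wdeg m2"
    by (simp add: wdeg_superset[of ?S])
  finally show ?thesis .
qed

lemma wdeg_single: "wdeg (Poly_Mapping.single v k) = k * wt v"
  by (simp add: wdeg_def)

definition sc :: "complex \<Rightarrow> complex^3^3 \<Rightarrow> complex^3^3" where
  "sc t M = (\<chi> i j. t * M$i$j)"

lemma sc_sl3: "M \<in> sl3 \<Longrightarrow> sc t M \<in> sl3"
  by (simp add: sc_def sl3_def ring_distribs[symmetric])

lemmas Idefs = I1_def I2_def I3_def I4_def I5_def I6_def
        cx1_def cy1_def cx2_def cy2_def cx3_def cy3_def ch1_def ch0_def

lemma I1_sc: "I1 (sc t M) = t * I1 M" unfolding Idefs sc_def by (simp add: algebra_simps)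
lemma I2_sc: "I2 (sc t M) = t^2 * I2 M" unfolding Idefs sc_def by simp algebra
lemma I3_sc: "I3 (sc t M) = t^2 * I3 M" unfolding Idefs sc_def by simp algebra
lemma I4_sc: "I4 (sc t M) = t^3 * I4 M" unfolding Idefs sc_def by simp algebra
lemma I5_sc: "I5 (sc t M) = t^3 * I5 M" unfolding Idefs sc_def by simp algebra
lemma I6_sc: "I6 (sc t M) = t^3 * I6 M" unfolding Idefs sc_def by simp algebra

lemma Inv_sc: "i \<in> {1..6} \<Longrightarrow> Inv i (sc t M) = t ^ wt i * Inv i M"
proof -
  assume "i \<in> {1..6}"
  hence "i = 1 \<or> i = 2 \<or> i = 3 \<or> i = 4 \<or> i = 5 \<or> i = 6" by auto
  thus ?thesis
    by (auto simp: Inv_def wt_def I1_sc I2_sc I3_sc I4_sc I5_sc I6_sc)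
qed

lemma mon_sc:
  assumes "Poly_Mapping.keys m \<subseteq> {1..6}"
  shows "mon (\<lambda>i. Inv i (sc t M)) m = t ^ wdeg m * mon (\<lambda>i. Inv i M) m"
proof -
  have "mon (\<lambda>i. Inv i (sc t M)) m = (\<Prod>i\<in>Poly_Mapping.keys m. t ^ (Poly_Mapping.lookup m i * wt i) * Inv i M ^ Poly_Mapping.lookup m i)"
    unfolding mon_def
  proof (intro prod.cong refl)
    fix i assume "i \<in> Poly_Mapping.keys m"
    hence "i \<in> {1..6}" using assms by auto
    thus "Inv i (sc t M) ^ Poly_Mapping.lookup m i = t ^ (Poly_Mapping.lookup m i * wt i) * Inv i M ^ Poly_Mapping.lookup m i"
      by (simp add: Inv_sc power_mult_distrib power_mult[symmetric] mult.commute)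
  qed
  also have "\<dots> = t ^ wdeg m * mon (\<lambda>i. Inv i M) m"
    by (simp add: prod.distrib power_sum wdeg_def mon_def)
  finally show ?thesis .
qed


definition hpart :: "nat \<Rightarrow> mpoly \<Rightarrow> mpoly" where
  "hpart d P = (\<Sum>m\<in>{m\<in>Poly_Mapping.keys P. wdeg m = d}. Poly_Mapping.single m (Poly_Mapping.lookup P m))"

lemma homog_extract:
  assumes "vars P \<subseteq> {1..6}" "\<And>t M. M \<in> sl3 \<Longrightarrow> polyfun P (sc t M) = t^d * polyfun P M"
  shows "polyfun P = polyfun (hpart d P)"
proof
  fix M
  show "polyfun P M = polyfun (hpart d P) M"
  proof (cases "M \<in> sl3")
    case False then show ?thesis by (simp add: polyfun_def)
  next
    case True
    have km: "Poly_Mapping.keys m \<subseteq> {1..6}" if "m \<in> Poly_Mapping.keys P" for m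
      using assms(1) that by (auto simp: vars_def)
    define q where "q = (\<Sum>m\<in>Poly_Mapping.keys P. Polynomial.monom (Poly_Mapping.lookup P m * mon (\<lambda>i. Inv i M) m) (wdeg m))"
    have "poly q t = poly (Polynomial.monom (polyfun P M) d) t" for t
    proof -
      have "poly q t = (\<Sum>m\<in>Poly_Mapping.keys P. Poly_Mapping.lookup P m * mon (\<lambda>i. Inv i (sc t M)) m)"
        unfolding q_def poly_sum poly_monom
        by (intro sum.cong refl) (simp add: mon_sc[OF km])
      also have "\<dots> = polyfun P (sc t M)"
        using sc_sl3[OF True] by (simp add: polyfun_def peval_def mon_def)
      also have "\<dots> = t^d * polyfun P M" by (rule assms(2)[OF True])
      finally show ?thesis by (simp add: poly_monom mult.commute)
    qed
    hence "poly q = poly (Polynomial.monom (polyfun P M) d)" by (rule ext)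
    hence qe: "q = Polynomial.monom (polyfun P M) d" by (simp add: poly_eq_poly_eq_iff)
    have "coeff q d = (\<Sum>m\<in>Poly_Mapping.keys P. if wdeg m = d then Poly_Mapping.lookup P m * mon (\<lambda>i. Inv i M) m else 0)"
      by (simp add: q_def coeff_sum coeff_monom eq_commute)
    also have "\<dots> = (\<Sum>m\<in>{m\<in>Poly_Mapping.keys P. wdeg m = d}. Poly_Mapping.lookup P m * mon (\<lambda>i. Inv i M) m)"
      by (simp add: sum.inter_filter)
    also have "\<dots> = polyfun (hpart d P) M"
      using True by (simp add: polyfun_def hpart_def peval_sum peval_single)
    finally show ?thesis using qe by simp
  qed
qed

lemma polyfun_sum_single:
  "polyfun (\<Sum>m\<in>S. Poly_Mapping.single m (c m)) M = (\<Sum>m\<in>S. c m * polyfun (Poly_Mapping.single m 1) M)"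
  by (simp add: polyfun_def peval_sum peval_single)

lemma coeff_zero:
  assumes "finite S" "\<And>m. m \<in> S \<Longrightarrow> Poly_Mapping.keys m \<subseteq> {1..6} \<and> Poly_Mapping.lookup m 6 \<le> 1"
    "\<And>M. (\<Sum>m\<in>S. c m * polyfun (Poly_Mapping.single m 1) M) = 0"
  shows "\<forall>m\<in>S. c m = 0"
proof -
  define upd where "upd m = Poly_Mapping.update 6 0 m" for m :: "nat \<Rightarrow>\<^sub>0 nat"
  define S0 where "S0 = {m\<in>S. Poly_Mapping.lookup m 6 = 0}"
  define S1 where "S1 = {m\<in>S. Poly_Mapping.lookup m 6 = 1}"
  have SU: "S = S0 \<union> S1" using assms(2) by (force simp: S0_def S1_def)
  have fin: "finite S0" "finite S1" using assms(1) by (auto simp: S0_def S1_def)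
  have upd1: "Poly_Mapping.single 6 1 + upd m = m" if "m \<in> S1" for m
    using that by (intro poly_mapping_eqI) (simp add: S1_def upd_def lookup_add lookup_update lookup_single when_def)
  define A where "A = (\<Sum>m\<in>S0. Poly_Mapping.single m (c m))"
  define B where "B = (\<Sum>m\<in>S1. Poly_Mapping.single (upd m) (c m))"
  have "Var 6 * B = (\<Sum>m\<in>S1. Poly_Mapping.single m (c m))"
    unfolding B_def sum_distrib_left
  proof (intro sum.cong refl)
    fix x assume x: "x \<in> S1"
    show "Var 6 * Poly_Mapping.single (upd x) (c x) = Poly_Mapping.single x (c x)"
      unfolding Var_def mult_single upd1[OF x] by simp
  qed
  hence PAB: "(\<Sum>m\<in>S. Poly_Mapping.single m (c m)) = 0 * relpoly + A + Var 6 * B"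
    unfolding A_def SU by (subst sum.union_disjoint) (use fin in \<open>auto simp: S0_def S1_def\<close>)
  have vA: "vars A \<subseteq> {1..5}"
  proof -
    have "vars (Poly_Mapping.single m (c m)) \<subseteq> {1..5}" if "m \<in> S0" for m
    proof -
      have "6 \<notin> Poly_Mapping.keys m" using that by (simp add: S0_def in_keys_iff)
      moreover have "Poly_Mapping.keys m \<subseteq> {1..6}" using assms(2)[of m] that by (simp add: S0_def)
      ultimately have "Poly_Mapping.keys m \<subseteq> {1..6} - {6}" by blast
      also have "{1..6} - {6} = {1..5::nat}" by auto
      finally have "Poly_Mapping.keys m \<subseteq> {1..5}" .
      thus ?thesis using vars_single[of m "c m"] by blast
    qed
    thus ?thesis unfolding A_def using vars_sum by blast
  qed
  have vB: "vars B \<subseteq> {1..5}"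
  proof -
    have "vars (Poly_Mapping.single (upd m) (c m)) \<subseteq> {1..5}" if "m \<in> S1" for m
    proof -
      have "Poly_Mapping.keys (upd m) \<subseteq> {1..5}"
        using assms(2)[of m] that by (auto simp: S1_def upd_def keys_update)
      thus ?thesis using vars_single[of "upd m" "c m"] by blast
    qed
    thus ?thesis unfolding B_def using vars_sum by blast
  qed
  have "polyfun A M + I6 M * polyfun B M = 0" for M
    using polyfun_dec[OF PAB, of M] assms(3)[of M] by (simp add: polyfun_sum_single)
  from core[OF vA vB this] have AB: "A = 0" "B = 0" by auto
  show ?thesis
  proof
    fix m assume mS: "m \<in> S"
    show "c m = 0"
    proof (cases "m \<in> S0")
      case True
      have "Poly_Mapping.lookup A m = (\<Sum>m'\<in>S0. if m' = m then c m' else 0)"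
        by (simp add: A_def lookup_sum lookup_single when_def)
      also have "\<dots> = c m" using True fin by simp
      finally show ?thesis using AB by simp
    next
      case False
      hence m1: "m \<in> S1" using mS SU by auto
      have "Poly_Mapping.lookup B (upd m) = (\<Sum>m'\<in>S1. if upd m' = upd m then c m' else 0)"
        by (simp add: B_def lookup_sum lookup_single when_def)
      also have "\<dots> = (\<Sum>m'\<in>S1. if m' = m then c m' else 0)"
        by (intro sum.cong refl) (metis upd1 m1)
      also have "\<dots> = c m" using m1 fin by simp
      finally show ?thesis using AB by simp
    qed
  qed
qed


interpretation FS: vector_space "fscale :: complex \<Rightarrow> (complex^3^3 \<Rightarrow> complex) \<Rightarrow> (complex^3^3 \<Rightarrow> complex)"
  by unfold_locales (auto simp: fscale_def fun_eq_iff algebra_simps)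

lemma fsum_apply: "(sum g K) x = (\<Sum>k\<in>K. g k x)"
  by (induction K rule: infinite_finite_induct) auto

definition ee :: "(nat \<Rightarrow>\<^sub>0 nat) \<Rightarrow> complex^3^3 \<Rightarrow> complex" where
  "ee m = polyfun (Poly_Mapping.single m 1)"

definition Nd :: "nat \<Rightarrow> (nat \<Rightarrow>\<^sub>0 nat) set" where
  "Nd d = {m. Poly_Mapping.keys m \<subseteq> {1..6} \<and> Poly_Mapping.lookup m 6 \<le> 1 \<and> wdeg m = d}"

lemma ee_Rdeg: "m \<in> Nd d \<Longrightarrow> ee m \<in> Rdeg d"
proof -
  assume m: "m \<in> Nd d"
  have "ee m \<in> Ralg" unfolding ee_def Ralg_def
    using m vars_single[of m 1] by (auto simp: Nd_def)
  moreover have "ee m (\<chi> i j. t * M$i$j) = t ^ d * ee m M" if "M \<in> sl3" for t M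
    using m that sc_sl3[OF that, of t] mon_sc[of m t M]
    by (simp add: ee_def polyfun_def sc_def[symmetric] peval_single Nd_def)
  ultimately show ?thesis unfolding Rdeg_def by auto
qed

lemma keys_decomp:
  assumes "vars A \<subseteq> {1..5}" "vars B \<subseteq> {1..5}" "m \<in> Poly_Mapping.keys (A + Var 6 * B)"
  shows "Poly_Mapping.keys m \<subseteq> {1..6} \<and> Poly_Mapping.lookup m 6 \<le> 1"
proof -
  from assms(3) have "m \<in> Poly_Mapping.keys A \<or> m \<in> Poly_Mapping.keys (Var 6 * B)"
    using keys_add[of A "Var 6 * B"] by auto
  thus ?thesis
  proof
    assume mA: "m \<in> Poly_Mapping.keys A"
    hence "Poly_Mapping.keys m \<subseteq> vars A" by (auto simp: vars_def)
    hence k: "Poly_Mapping.keys m \<subseteq> {1..5}" using assms(1) by blast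
    hence "6 \<notin> Poly_Mapping.keys m" by auto
    hence "Poly_Mapping.lookup m 6 = 0" by (simp add: in_keys_iff)
    with k show ?thesis by auto
  next
    assume "m \<in> Poly_Mapping.keys (Var 6 * B)"
    then obtain a b where ab: "a \<in> Poly_Mapping.keys (Var 6)" "b \<in> Poly_Mapping.keys B" "m = a + b"
      using keys_mult[of "Var 6" B] by blast
    have a: "a = Poly_Mapping.single 6 1" using ab(1) by (simp add: Var_def)
    have "Poly_Mapping.keys b \<subseteq> vars B" using ab(2) by (auto simp: vars_def)
    hence kb: "Poly_Mapping.keys b \<subseteq> {1..5}" using assms(2) by blast
    hence "6 \<notin> Poly_Mapping.keys b" by auto
    hence "Poly_Mapping.lookup b 6 = 0" by (simp add: in_keys_iff)
    hence "Poly_Mapping.lookup m 6 = 1" by (simp add: ab(3) a lookup_add)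
    moreover have "Poly_Mapping.keys m \<subseteq> {1..6}"
    proof -
      have "Poly_Mapping.keys m \<subseteq> Poly_Mapping.keys a \<union> Poly_Mapping.keys b" by (simp add: ab(3) keys_add)
      moreover have "Poly_Mapping.keys a = {6}" by (simp add: a)
      ultimately have "Poly_Mapping.keys m \<subseteq> {6} \<union> {1..5}" using kb by blast
      also have "\<dots> \<subseteq> {1..6}" by auto
      finally show ?thesis .
    qed
    ultimately show ?thesis by simp
  qed
qed

lemma Rdeg_span: "f \<in> Rdeg d \<Longrightarrow> f \<in> FS.span (ee ` Nd d)"
proof -
  assume f: "f \<in> Rdeg d"
  then obtain P where P: "vars P \<subseteq> {1..6}" "f = polyfun P" by (auto simp: Rdeg_def Ralg_def)
  obtain Q A B where QAB: "vars Q \<subseteq> {1..6}" "vars A \<subseteq> {1..5}" "vars B \<subseteq> {1..5}"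
    "P = Q * relpoly + A + Var 6 * B"
    using DEC_all[OF P(1)] unfolding DEC_def by blast
  define P' where "P' = A + Var 6 * B"
  have P'e: "P' = 0 * relpoly + A + Var 6 * B" by (simp add: P'_def)
  have fP': "f = polyfun P'"
    using polyfun_dec[OF QAB(4)] polyfun_dec[OF P'e] P(2) by (simp add: fun_eq_iff)
  have kP': "Poly_Mapping.keys m \<subseteq> {1..6} \<and> Poly_Mapping.lookup m 6 \<le> 1" if "m \<in> Poly_Mapping.keys P'" for m
    using keys_decomp[OF QAB(2,3)] that by (simp add: P'_def)
  have vP': "vars P' \<subseteq> {1..6}" using kP' by (auto simp: vars_def)
  have hom: "polyfun P' (sc t M) = t^d * polyfun P' M" if "M \<in> sl3" for t M
    using f that unfolding fP' by (auto simp: Rdeg_def sc_def)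
  have "f = polyfun (hpart d P')" using homog_extract[OF vP' hom] fP' by simp
  also have "\<dots> = (\<Sum>m\<in>{m\<in>Poly_Mapping.keys P'. wdeg m = d}. fscale (Poly_Mapping.lookup P' m) (ee m))"
    by (simp add: fun_eq_iff fsum_apply hpart_def polyfun_sum_single fscale_def ee_def)
  also have "\<dots> \<in> FS.span (ee ` Nd d)"
  proof (intro FS.span_sum FS.span_scale FS.span_base)
    fix m assume "m \<in> {m\<in>Poly_Mapping.keys P'. wdeg m = d}"
    thus "ee m \<in> ee ` Nd d" using kP' by (auto simp: Nd_def)
  qed
  finally show ?thesis .
qed

lemma ee_comb_zero:
  assumes "finite S" "S \<subseteq> Nd d" "(\<Sum>m\<in>S. fscale (c m) (ee m)) = 0"
  shows "\<forall>m\<in>S. c m = 0"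
proof (rule coeff_zero[OF assms(1)])
  fix m assume "m \<in> S" thus "Poly_Mapping.keys m \<subseteq> {1..6} \<and> Poly_Mapping.lookup m 6 \<le> 1"
    using assms(2) by (auto simp: Nd_def)
next
  fix M show "(\<Sum>m\<in>S. c m * polyfun (Poly_Mapping.single m 1) M) = 0"
    using fun_cong[OF assms(3), of M] by (simp add: fsum_apply fscale_def ee_def)
qed

lemma ee_inj: "inj_on ee (Nd d)"
proof (rule inj_onI, rule ccontr)
  fix m1 m2 assume m: "m1 \<in> Nd d" "m2 \<in> Nd d" "ee m1 = ee m2" "m1 \<noteq> m2"
  define c where "c m = (if m = m1 then 1 else - 1 :: complex)" for m
  have "(\<Sum>m\<in>{m1,m2}. fscale (c m) (ee m)) = 0"
    using m by (simp add: c_def fscale_def fun_eq_iff)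
  from ee_comb_zero[of "{m1,m2}" d c, OF _ _ this] m show False by (simp add: c_def)
qed

lemma ee_indep: "FS.independent (ee ` Nd d)"
  unfolding FS.independent_explicit_finite_subsets
proof (intro allI impI ballI)
  fix S u v assume S: "S \<subseteq> ee ` Nd d" "finite S" "(\<Sum>v\<in>S. fscale (u v) v) = 0" and v: "v \<in> S"
  define T where "T = {m\<in>Nd d. ee m \<in> S}"
  have ST: "S = ee ` T" using S(1) by (auto simp: T_def)
  have injT: "inj_on ee T" using ee_inj by (rule inj_on_subset) (auto simp: T_def)
  have finT: "finite T" using S(2) ST injT finite_imageD by blast
  have "(\<Sum>m\<in>T. fscale (u (ee m)) (ee m)) = 0"
    using S(3) unfolding ST by (simp add: sum.reindex[OF injT])
  from ee_comb_zero[OF finT _ this] have "\<forall>m\<in>T. u (ee m) = 0" by (auto simp: T_def)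
  thus "u v = 0" using v ST by auto
qed

lemma hilb_card: "hilb d = card (Nd d)" and Rdeg_fin_span: "Rdeg d \<subseteq> FS.span (ee ` Nd d)"
proof -
  show sp: "Rdeg d \<subseteq> FS.span (ee ` Nd d)" using Rdeg_span by blast
  have "FS.dim (Rdeg d) = card (ee ` Nd d)"
    by (rule FS.dim_unique[OF _ sp ee_indep refl]) (auto intro: ee_Rdeg)
  thus "hilb d = card (Nd d)" by (simp add: hilb_def card_image[OF ee_inj])
qed


definition NV :: "nat set \<Rightarrow> nat \<Rightarrow> (nat \<Rightarrow>\<^sub>0 nat) set" where
  "NV V n = {m. Poly_Mapping.keys m \<subseteq> V \<and> wdeg m = n}"

definition Gw :: "nat \<Rightarrow> rat fps" where
  "Gw w = Abs_fps (\<lambda>n. if w dvd n then 1 else 0)"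

lemma wt_pos: "wt i > 0" by (simp add: wt_def)

lemma Gw_mult_nth:
  assumes "w > 0"
  shows "fps_nth (Gw w * F) n = (\<Sum>k\<in>{k. k * w \<le> n}. fps_nth F (n - k * w))"
proof -
  have "fps_nth (Gw w * F) n = (\<Sum>i=0..n. (if w dvd i then 1 else 0) * fps_nth F (n - i))"
    by (simp add: fps_mult_nth Gw_def)
  also have "\<dots> = (\<Sum>i=0..n. if w dvd i then fps_nth F (n - i) else 0)"
    by (intro sum.cong) auto
  also have "\<dots> = (\<Sum>i\<in>{i\<in>{0..n}. w dvd i}. fps_nth F (n - i))"
    by (rule sum.inter_filter[symmetric]) simp
  also have "{i\<in>{0..n}. w dvd i} = (\<lambda>k. k * w) ` {k. k * w \<le> n}"
    by (auto elim!: dvdE simp: mult.commute)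
  also have "(\<Sum>i\<in>(\<lambda>k. k * w) ` {k. k * w \<le> n}. fps_nth F (n - i)) = (\<Sum>k\<in>{k. k * w \<le> n}. fps_nth F (n - k * w))"
    using assms by (subst sum.reindex) (auto simp: inj_on_def)
  finally show ?thesis .
qed

lemma wdeg_zero [simp]: "wdeg 0 = 0" by (simp add: wdeg_def)

lemma count_NV:
  assumes "finite V"
  shows "finite (NV V n) \<and> fps_nth (\<Prod>i\<in>V. Gw (wt i)) n = of_nat (card (NV V n))"
  using assms
proof (induction V arbitrary: n rule: finite_induct)
  case empty
  have "NV {} n = (if n = 0 then {0} else {})" by (auto simp: NV_def)
  then show ?case by simp
next
  case (insert v V)
  define w where "w = wt v"
  have w: "w > 0" by (simp add: w_def wt_pos)
  define K where "K = {k. k * w \<le> n}"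
  have finK: "finite K"
  proof (rule finite_subset[of _ "{..n}"])
    show "K \<subseteq> {..n}"
    proof
      fix k assume "k \<in> K"
      hence "k * w \<le> n" by (simp add: K_def)
      moreover have "k \<le> k * w" using w by simp
      ultimately have "k \<le> n" by (rule order_trans[rotated])
      thus "k \<in> {..n}" by simp
    qed
  qed simp
  define Sg where "Sg = (SIGMA k:K. NV V (n - k * w))"
  define \<Phi> where "\<Phi> = (\<lambda>(k::nat, m::nat \<Rightarrow>\<^sub>0 nat). Poly_Mapping.single v k + m)"
  have finSg: "finite Sg" unfolding Sg_def using finK insert.IH by auto
  have vn: "v \<notin> Poly_Mapping.keys m" if "m \<in> NV V j" for m j
    using that insert.hyps(2) by (auto simp: NV_def)
  have eq: "NV (insert v V) n = \<Phi> ` Sg"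
  proof
    show "\<Phi> ` Sg \<subseteq> NV (insert v V) n"
    proof
      fix x assume "x \<in> \<Phi> ` Sg"
      then obtain k m where km: "k \<in> K" "m \<in> NV V (n - k * w)" "x = Poly_Mapping.single v k + m"
        by (auto simp: Sg_def \<Phi>_def)
      have "Poly_Mapping.keys x \<subseteq> Poly_Mapping.keys (Poly_Mapping.single v k) \<union> Poly_Mapping.keys m"
        unfolding km(3) by (rule keys_add)
      moreover have "Poly_Mapping.keys m \<subseteq> V" using km(2) by (simp add: NV_def)
      ultimately have "Poly_Mapping.keys x \<subseteq> insert v V" by (auto split: if_splits)
      moreover have "wdeg x = n" using km by (simp add: K_def NV_def wdeg_add wdeg_single w_def)
      ultimately show "x \<in> NV (insert v V) n" by (simp add: NV_def)
    qed
  next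
    show "NV (insert v V) n \<subseteq> \<Phi> ` Sg"
    proof
      fix x assume x: "x \<in> NV (insert v V) n"
      define k where "k = Poly_Mapping.lookup x v"
      define m where "m = Poly_Mapping.update v 0 x"
      have xe: "x = Poly_Mapping.single v k + m"
        by (rule poly_mapping_eqI) (simp add: k_def m_def lookup_add lookup_update lookup_single when_def)
      have km: "Poly_Mapping.keys m \<subseteq> V" using x by (auto simp: m_def keys_update NV_def)
      have "wdeg x = k * w + wdeg m" using xe by (metis wdeg_add wdeg_single w_def)
      hence "k * w \<le> n" "wdeg m = n - k * w" using x by (auto simp: NV_def)
      hence "(k, m) \<in> Sg" using km by (simp add: Sg_def K_def NV_def)
      thus "x \<in> \<Phi> ` Sg" using xe by (force simp: \<Phi>_def)
    qed
  qed
  have inj: "inj_on \<Phi> Sg"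
  proof (rule inj_onI)
    fix a b assume ab: "a \<in> Sg" "b \<in> Sg" "\<Phi> a = \<Phi> b"
    obtain k1 m1 where a: "a = (k1, m1)" "m1 \<in> NV V (n - k1 * w)" using ab(1) by (auto simp: Sg_def)
    obtain k2 m2 where b: "b = (k2, m2)" "m2 \<in> NV V (n - k2 * w)" using ab(2) by (auto simp: Sg_def)
    have e: "Poly_Mapping.single v k1 + m1 = Poly_Mapping.single v k2 + m2" using ab(3) a b by (simp add: \<Phi>_def)
    have l1: "Poly_Mapping.lookup m1 v = 0" "Poly_Mapping.lookup m2 v = 0"
      using vn[OF a(2)] vn[OF b(2)] by (simp_all add: in_keys_iff)
    have "Poly_Mapping.lookup (Poly_Mapping.single v k1 + m1) v = Poly_Mapping.lookup (Poly_Mapping.single v k2 + m2) v"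
      using e by simp
    hence k: "k1 = k2" using l1 by (simp add: lookup_add)
    with e have "m1 = m2" by simp
    with k a b show "a = b" by simp
  qed
  have "card (NV (insert v V) n) = card Sg" using eq card_image[OF inj] by simp
  also have "\<dots> = (\<Sum>k\<in>K. card (NV V (n - k * w)))"
    unfolding Sg_def using finK insert.IH by simp
  finally have c: "card (NV (insert v V) n) = (\<Sum>k\<in>K. card (NV V (n - k * w)))" .
  have "fps_nth (\<Prod>i\<in>insert v V. Gw (wt i)) n = fps_nth (Gw w * (\<Prod>i\<in>V. Gw (wt i))) n"
    using insert.hyps by (simp add: w_def)
  also have "\<dots> = (\<Sum>k\<in>K. fps_nth (\<Prod>i\<in>V. Gw (wt i)) (n - k * w))"
    by (simp add: Gw_mult_nth[OF w] K_def)
  also have "\<dots> = of_nat (card (NV (insert v V) n))"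
    using insert.IH by (simp add: c)
  finally show ?case using eq finSg by simp
qed


lemma keys15: "Poly_Mapping.keys (m::nat \<Rightarrow>\<^sub>0 nat) \<subseteq> {1..6} \<Longrightarrow> Poly_Mapping.lookup m 6 = 0 \<Longrightarrow> Poly_Mapping.keys m \<subseteq> {1..5}"
proof -
  assume a: "Poly_Mapping.keys m \<subseteq> {1..6}" "Poly_Mapping.lookup m 6 = 0"
  hence "Poly_Mapping.keys m \<subseteq> {1..6} - {6}" by (auto simp: in_keys_iff)
  also have "{1..6} - {6} = {1..5::nat}" by auto
  finally show ?thesis .
qed

lemma keys15': "Poly_Mapping.keys (m::nat \<Rightarrow>\<^sub>0 nat) \<subseteq> {1..5} \<Longrightarrow> Poly_Mapping.lookup m 6 = 0"
  by (auto simp: in_keys_iff)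

lemma Nd_decomp:
  "Nd d = NV {1..5} d \<union> (if 3 \<le> d then (\<lambda>m. Poly_Mapping.single 6 1 + m) ` NV {1..5} (d - 3) else {})"
proof
  show "Nd d \<subseteq> NV {1..5} d \<union> (if 3 \<le> d then (\<lambda>m. Poly_Mapping.single 6 1 + m) ` NV {1..5} (d - 3) else {})"
  proof
    fix m assume m: "m \<in> Nd d"
    show "m \<in> NV {1..5} d \<union> (if 3 \<le> d then (\<lambda>m. Poly_Mapping.single 6 1 + m) ` NV {1..5} (d - 3) else {})"
    proof (cases "Poly_Mapping.lookup m 6 = 0")
      case True
      then show ?thesis using m keys15[of m] by (simp add: Nd_def NV_def)
    next
      case False
      hence l1: "Poly_Mapping.lookup m 6 = 1" using m by (simp add: Nd_def)
      define u where "u = Poly_Mapping.update 6 0 m"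
      have me: "m = Poly_Mapping.single 6 1 + u"
        by (rule poly_mapping_eqI) (simp add: u_def l1 lookup_add lookup_update lookup_single when_def)
      have ku: "Poly_Mapping.keys u \<subseteq> {1..5}"
        using m by (intro keys15) (auto simp: u_def keys_update lookup_update Nd_def)
      have "wdeg m = wdeg (Poly_Mapping.single 6 1) + wdeg u"
        using wdeg_add[of "Poly_Mapping.single 6 1" u] me by simp
      hence "wdeg m = 3 + wdeg u" by (simp add: wdeg_single wt_def)
      hence "3 \<le> d" "wdeg u = d - 3" using m by (auto simp: Nd_def)
      thus ?thesis using me ku by (auto simp: NV_def)
    qed
  qed
next
  have "NV {1..5} d \<subseteq> Nd d"
  proof
    fix m assume "m \<in> NV {1..5} d"
    thus "m \<in> Nd d" using keys15'[of m] by (auto simp: NV_def Nd_def)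
  qed
  moreover have "Poly_Mapping.single 6 1 + m \<in> Nd d" if "3 \<le> d" "m \<in> NV {1..5} (d - 3)" for m
  proof -
    have km: "Poly_Mapping.keys m \<subseteq> {1..5}" "wdeg m = d - 3" using that by (auto simp: NV_def)
    have "Poly_Mapping.keys (Poly_Mapping.single 6 1 + m) \<subseteq> Poly_Mapping.keys (Poly_Mapping.single (6::nat) (1::nat)) \<union> Poly_Mapping.keys m"
      by (rule keys_add)
    also have "\<dots> \<subseteq> {1..6}" using km(1) by auto
    finally have k: "Poly_Mapping.keys (Poly_Mapping.single 6 1 + m) \<subseteq> {1..6}" .
    have "Poly_Mapping.lookup (Poly_Mapping.single 6 1 + m) 6 = 1"
      using keys15'[OF km(1)] by (simp add: lookup_add)
    moreover have "wdeg (Poly_Mapping.single 6 1 + m) = d"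
      using km(2) that(1) by (simp add: wdeg_add wdeg_single wt_def)
    ultimately show ?thesis using k by (simp add: Nd_def)
  qed
  ultimately show "NV {1..5} d \<union> (if 3 \<le> d then (\<lambda>m. Poly_Mapping.single 6 1 + m) ` NV {1..5} (d - 3) else {}) \<subseteq> Nd d"
    by auto
qed

lemma card_Nd:
  "card (Nd d) = card (NV {1..5} d) + (if 3 \<le> d then card (NV {1..5} (d - 3)) else 0)"
proof -
  have f1: "finite (NV {1..5} n)" for n using count_NV[of "{1..5}" n] by simp
  have inj: "inj_on (\<lambda>m. Poly_Mapping.single 6 1 + m) X" for X :: "(nat \<Rightarrow>\<^sub>0 nat) set"
    by (simp add: inj_on_def)
  have disj: "NV {1..5} d \<inter> (\<lambda>m. Poly_Mapping.single 6 1 + m) ` NV {1..5} (d - 3) = {}"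
  proof -
    have "Poly_Mapping.lookup x 6 = 0" if "x \<in> NV {1..5} d" for x
      using that keys15'[of x] by (simp add: NV_def)
    moreover have "Poly_Mapping.lookup (Poly_Mapping.single 6 1 + m) 6 = 1" if "m \<in> NV {1..5} (d - 3)" for m
      using that keys15'[of m] by (simp add: NV_def lookup_add)
    ultimately show ?thesis by fastforce
  qed
  show ?thesis
  proof (cases "3 \<le> d")
    case True
    then show ?thesis
      using Nd_decomp[of d] card_Un_disjoint[OF f1 finite_imageI[OF f1] disj] card_image[OF inj] by simp
  next
    case False
    then show ?thesis using Nd_decomp[of d] by simp
  qed
qed

lemma Gw_inv:
  assumes "w > 0" shows "Gw w * (1 - fps_X ^ w) = 1"
proof (rule fps_ext)
  fix n
  have "fps_nth (Gw w * (1 - fps_X ^ w)) n = fps_nth (Gw w) n - (if n < w then 0 else fps_nth (Gw w) (n - w))"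
    by (simp add: algebra_simps fps_X_power_mult_right_nth)
  also have "\<dots> = fps_nth 1 n"
  proof (cases "n < w")
    case True
    then show ?thesis using assms by (cases "n = 0") (auto simp: Gw_def dest: dvd_imp_le)
  next
    case False
    then obtain j where "n = w + j" using le_Suc_ex not_less by blast
    then show ?thesis using assms by (auto simp: Gw_def)
  qed
  finally show "fps_nth (Gw w * (1 - fps_X ^ w)) n = fps_nth 1 n" .
qed

lemma hilb_fps:
  "Abs_fps (\<lambda>d. of_nat (hilb d) :: rat)
        = (1 + fps_X ^ 3) / ((1 - fps_X) * (1 - fps_X ^ 2) ^ 2 * (1 - fps_X ^ 3) ^ 2)"
proof -
  define GG where "GG = (\<Prod>i\<in>{1..5}. Gw (wt i))"
  have cGG: "fps_nth GG n = of_nat (card (NV {1..5} n))" for n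
    using count_NV[of "{1..5}" n] by (simp add: GG_def)
  have A: "Abs_fps (\<lambda>d. of_nat (hilb d) :: rat) = (1 + fps_X ^ 3) * GG"
  proof (rule fps_ext)
    fix n
    show "fps_nth (Abs_fps (\<lambda>d. of_nat (hilb d) :: rat)) n = fps_nth ((1 + fps_X ^ 3) * GG) n"
      by (simp add: hilb_card card_Nd distrib_right fps_X_power_mult_nth cGG not_less)
  qed
  have "{1..5::nat} = {1,2,3,4,5}" by auto
  hence G5: "GG = Gw 1 * (Gw 2 * (Gw 2 * (Gw 3 * Gw 3)))" by (simp add: GG_def wt_def)
  define den :: "rat fps" where "den = (1 - fps_X) * (1 - fps_X ^ 2) ^ 2 * (1 - fps_X ^ 3) ^ 2"
  have "GG * den = (Gw 1 * (1 - fps_X ^ 1)) * (Gw 2 * (1 - fps_X ^ 2)) * (Gw 2 * (1 - fps_X ^ 2))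
      * (Gw 3 * (1 - fps_X ^ 3)) * (Gw 3 * (1 - fps_X ^ 3))"
    by (simp add: G5 den_def power2_eq_square mult_ac)
  also have "\<dots> = 1"
    using Gw_inv[of 1] Gw_inv[of 2] Gw_inv[of 3] by (simp del: power_one_right)
  finally have Gd: "GG * den = 1" .
  hence dn: "den \<noteq> 0" by auto
  have "(1 + fps_X ^ 3) / den = ((1 + fps_X ^ 3) * GG * den) / den"
    by (simp add: Gd mult.assoc)
  also have "\<dots> = (1 + fps_X ^ 3) * GG" by (rule nonzero_mult_div_cancel_right[OF dn])
  finally show ?thesis using A by (simp add: den_def)
qed


lemma finite_Nd: "finite (Nd d)"
  using Nd_decomp[of d] count_NV[of "{1..5}" d] count_NV[of "{1..5}" "d - 3"] by auto

theorem mainTheorem5: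
  shows "(\<forall>M\<in>sl3. I2 M * I3 M ^ 2 - 4 * I4 M * I5 M - I6 M ^ 2 = 0)
    \<and> (\<forall>P. vars P \<subseteq> {1..5} \<longrightarrow> polyfun P = (\<lambda>_. 0) \<longrightarrow> P = 0)
    \<and> (\<forall>P. vars P \<subseteq> {1..6} \<longrightarrow> polyfun P = (\<lambda>_. 0) \<longrightarrow>
          (\<exists>Q. vars Q \<subseteq> {1..6} \<and> P = Q * relpoly))
    \<and> (\<forall>f\<in>Ralg. \<exists>A B. vars A \<subseteq> {1..5} \<and> vars B \<subseteq> {1..5} \<and>
          f = (\<lambda>M. polyfun A M + I6 M * polyfun B M))
    \<and> (\<forall>A B. vars A \<subseteq> {1..5} \<longrightarrow> vars B \<subseteq> {1..5} \<longrightarrow>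
          (\<lambda>M. polyfun A M + I6 M * polyfun B M) = (\<lambda>_. 0) \<longrightarrow>
          polyfun A = (\<lambda>_. 0) \<and> polyfun B = (\<lambda>_. 0))
    \<and> (\<forall>d. \<exists>B. finite B \<and> Rdeg d \<subseteq> module.span fscale B)
    \<and> Abs_fps (\<lambda>d. of_nat (hilb d) :: rat)
        = (1 + fps_X ^ 3) / ((1 - fps_X) * (1 - fps_X ^ 2) ^ 2 * (1 - fps_X ^ 3) ^ 2)"
proof (intro conjI allI ballI impI)
  fix M :: "complex^3^3" show "I2 M * I3 M ^ 2 - 4 * I4 M * I5 M - I6 M ^ 2 = 0"
    by (rule relation_identity)
next
  fix P assume "vars P \<subseteq> {1..5}" "polyfun P = (\<lambda>_. 0)"
  thus "P = 0" by (rule indep)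
next
  fix P assume P: "vars P \<subseteq> {1..6}" "polyfun P = (\<lambda>_. 0)"
  obtain Q A B where QAB: "vars Q \<subseteq> {1..6}" "vars A \<subseteq> {1..5}" "vars B \<subseteq> {1..5}"
    "P = Q * relpoly + A + Var 6 * B"
    using DEC_all[OF P(1)] unfolding DEC_def by blast
  have "polyfun A M + I6 M * polyfun B M = 0" for M
    using polyfun_dec[OF QAB(4), of M] P(2) by (simp add: fun_eq_iff)
  from core[OF QAB(2,3) this] have "A = 0" "B = 0" by auto
  thus "\<exists>Q. vars Q \<subseteq> {1..6} \<and> P = Q * relpoly" using QAB by auto
next
  fix f assume "f \<in> Ralg"
  then obtain P where P: "vars P \<subseteq> {1..6}" "f = polyfun P" by (auto simp: Ralg_def)
  obtain Q A B where QAB: "vars Q \<subseteq> {1..6}" "vars A \<subseteq> {1..5}" "vars B \<subseteq> {1..5}"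
    "P = Q * relpoly + A + Var 6 * B"
    using DEC_all[OF P(1)] unfolding DEC_def by blast
  have "f = (\<lambda>M. polyfun A M + I6 M * polyfun B M)"
    using polyfun_dec[OF QAB(4)] P(2) by (simp add: fun_eq_iff)
  thus "\<exists>A B. vars A \<subseteq> {1..5} \<and> vars B \<subseteq> {1..5} \<and> f = (\<lambda>M. polyfun A M + I6 M * polyfun B M)"
    using QAB by blast
next
  fix A B assume AB: "vars A \<subseteq> {1..5}" "vars B \<subseteq> {1..5}" "(\<lambda>M. polyfun A M + I6 M * polyfun B M) = (\<lambda>_. 0)"
  have "polyfun A M + I6 M * polyfun B M = 0" for M using fun_cong[OF AB(3), of M] by simp
  from core[OF AB(1,2) this] show "polyfun A = (\<lambda>_. 0)" "polyfun B = (\<lambda>_. 0)" by auto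
next
  fix d show "\<exists>B. finite B \<and> Rdeg d \<subseteq> module.span fscale B"
    using finite_Nd[of d] Rdeg_fin_span[of d] by blast
next
  show "Abs_fps (\<lambda>d. of_nat (hilb d) :: rat)
        = (1 + fps_X ^ 3) / ((1 - fps_X) * (1 - fps_X ^ 2) ^ 2 * (1 - fps_X ^ 3) ^ 2)"
    by (rule hilb_fps)
qed

end
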